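(* Let $F$ be an Archimedean vector lattice and $E$ a regular sublattice of $F$. Then the order adherence $\overline{E}^{1}_{o}$ of $E$ is a regular sublattice of $F$ in which $E$ is order dense, and every regular sublattice $H$ of $F$ in which $E$ is order dense satisfies $H\subset\overline{E}^{1}_{o}$.
   Context: A net order converges to $f$ if there is a set $G$ with $\bigwedge G=0$ such that for each $g\in G$ the net is eventually in $[f-g,f+g]$. The order adherence $\overline{E}^1_o$ is the set of order limits (in $F$) of nets in $E$. A sublattice $E\subset F$ is regular if for every $G\subset E$ with $\bigwedge_E G=0$ one has $\bigwedge_F G=0$. $E$ is order dense in a sublattice $H\supset E$ if for every $h\in H$ with $h>0$ there is $e\in E$ with $0<e\le h$. *)

theory Defs
  imports "HOL-Analysis.Analysis"
begin

definition archimedean_vl :: "'a::{ordered_real_vector, lattice} itself \<Rightarrow> bool" where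
  "archimedean_vl _ \<longleftrightarrow>
     (\<forall>x y :: 'a. 0 \<le> x \<and> 0 \<le> y \<and> (\<forall>n::nat. of_nat n *\<^sub>R x \<le> y) \<longrightarrow> x = 0)"

definition is_inf_in :: "'a::order set \<Rightarrow> 'a set \<Rightarrow> 'a \<Rightarrow> bool" where
  "is_inf_in A G m \<longleftrightarrow> m \<in> A \<and> (\<forall>g\<in>G. m \<le> g) \<and> (\<forall>a\<in>A. (\<forall>g\<in>G. a \<le> g) \<longrightarrow> a \<le> m)"

definition vl_sublattice :: "'a::{ordered_real_vector, lattice} set \<Rightarrow> bool" where
  "vl_sublattice E \<longleftrightarrow> subspace E \<and> (\<forall>x\<in>E. \<forall>y\<in>E. sup x y \<in> E \<and> inf x y \<in> E)"

definition regular_sublattice :: "'a::{ordered_real_vector, lattice} set \<Rightarrow> bool" where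
  "regular_sublattice E \<longleftrightarrow> vl_sublattice E \<and>
     (\<forall>G. G \<subseteq> E \<longrightarrow> is_inf_in E G 0 \<longrightarrow> is_inf_in UNIV G 0)"

text \<open>Order convergence of a net, nets being represented (as usual in Isabelle) by
  proper filters: the net is eventually in [f-g, f+g] for each g in G, where inf G = 0 in F.\<close>
definition order_converges :: "'a::{ordered_real_vector, lattice} filter \<Rightarrow> 'a \<Rightarrow> bool" where
  "order_converges N f \<longleftrightarrow>
     (\<exists>G. is_inf_in UNIV G 0 \<and> (\<forall>g\<in>G. eventually (\<lambda>x. f - g \<le> x \<and> x \<le> f + g) N))"

definition order_adherence :: "'a::{ordered_real_vector, lattice} set \<Rightarrow> 'a set" where
  "order_adherence E = {f. \<exists>N. N \<noteq> bot \<and> eventually (\<lambda>x. x \<in> E) N \<and> order_converges N f}"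

definition order_dense_in :: "'a::{ordered_real_vector, lattice} set \<Rightarrow> 'a set \<Rightarrow> bool" where
  "order_dense_in E H \<longleftrightarrow> E \<subseteq> H \<and> (\<forall>h\<in>H. 0 < h \<longrightarrow> (\<exists>e\<in>E. 0 < e \<and> e \<le> h))"

end

theory Submission
  imports Defs
begin

lemma sup_inf_add:
  fixes x y :: "'a::{ordered_real_vector, lattice}"
  shows "sup x y + inf x y = x + y"
proof -
  have "inf x y = x + y - sup x y"
  proof (rule antisym)
    have "sup x y \<le> x + y - inf x y"
      by (rule sup_least) (simp_all add: le_diff_eq add_left_mono add_right_mono)
    then show "inf x y \<le> x + y - sup x y" by (simp add: le_diff_eq algebra_simps)
    show "x + y - sup x y \<le> inf x y"
      by (rule le_infI) (simp_all add: diff_le_eq add_left_mono add_right_mono)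
  qed
  then show ?thesis by simp
qed

lemma is_inf_sum:
  fixes G1 G2 :: "'a::{ordered_real_vector, lattice} set"
  assumes "is_inf_in UNIV G1 0" "is_inf_in UNIV G2 0"
  shows "is_inf_in UNIV {g1 + g2 | g1 g2. g1 \<in> G1 \<and> g2 \<in> G2} 0"
  unfolding is_inf_in_def
proof (intro conjI ballI impI)
  show "0 \<in> (UNIV::'a set)" by simp
  fix g assume "g \<in> {g1 + g2 | g1 g2. g1 \<in> G1 \<and> g2 \<in> G2}"
  then show "0 \<le> g" using assms unfolding is_inf_in_def by (auto intro: add_nonneg_nonneg)
next
  fix z :: 'a assume z: "\<forall>g\<in>{g1 + g2 | g1 g2. g1 \<in> G1 \<and> g2 \<in> G2}. z \<le> g"
  have "z \<le> g2" if "g2 \<in> G2" for g2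
  proof -
    have "z - g2 \<le> g1" if "g1 \<in> G1" for g1
      using z \<open>g2 \<in> G2\<close> that by (force simp: diff_le_eq add.commute)
    then have "z - g2 \<le> 0" using assms(1) unfolding is_inf_in_def by blast
    then show ?thesis by simp
  qed
  then show "z \<le> 0" using assms(2) unfolding is_inf_in_def by blast
qed

lemma adh_binop:
  fixes E :: "'a::{ordered_real_vector, lattice} set"
  assumes f1: "f1 \<in> order_adherence E" and f2: "f2 \<in> order_adherence E"
    and cl: "\<And>x y. x \<in> E \<Longrightarrow> y \<in> E \<Longrightarrow> op x y \<in> E"
    and bd: "\<And>x y g1 g2. 0 \<le> g1 \<Longrightarrow> 0 \<le> g2 \<Longrightarrow> f1 - g1 \<le> x \<Longrightarrow> x \<le> f1 + g1
       \<Longrightarrow> f2 - g2 \<le> y \<Longrightarrow> y \<le> f2 + g2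
       \<Longrightarrow> op f1 f2 - (g1 + g2) \<le> op x y \<and> op x y \<le> op f1 f2 + (g1 + g2)"
  shows "op f1 f2 \<in> order_adherence E"
proof -
  obtain N1 G1 where N1: "N1 \<noteq> bot" "eventually (\<lambda>x. x \<in> E) N1" "is_inf_in UNIV G1 0"
    "\<forall>g\<in>G1. eventually (\<lambda>x. f1 - g \<le> x \<and> x \<le> f1 + g) N1"
    using f1 unfolding order_adherence_def order_converges_def by blast
  obtain N2 G2 where N2: "N2 \<noteq> bot" "eventually (\<lambda>x. x \<in> E) N2" "is_inf_in UNIV G2 0"
    "\<forall>g\<in>G2. eventually (\<lambda>x. f2 - g \<le> x \<and> x \<le> f2 + g) N2"
    using f2 unfolding order_adherence_def order_converges_def by blast
  define N where "N = filtermap (\<lambda>(x,y). op x y) (N1 \<times>\<^sub>F N2)"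
  have "N \<noteq> bot" using N1(1) N2(1) by (simp add: N_def prod_filter_eq_bot filtermap_bot_iff)
  moreover have "eventually (\<lambda>x. x \<in> E) N"
    unfolding N_def eventually_filtermap eventually_prod_filter
    apply (rule exI[of _ "\<lambda>x. x \<in> E"], rule exI[of _ "\<lambda>x. x \<in> E"])
    using N1(2) N2(2) cl by auto
  moreover have "order_converges N (op f1 f2)"
    unfolding order_converges_def
  proof (intro exI conjI)
    show "is_inf_in UNIV {g1 + g2 | g1 g2. g1 \<in> G1 \<and> g2 \<in> G2} 0"
      by (rule is_inf_sum[OF N1(3) N2(3)])
    show "\<forall>g\<in>{g1 + g2 | g1 g2. g1 \<in> G1 \<and> g2 \<in> G2}.
        eventually (\<lambda>x. op f1 f2 - g \<le> x \<and> x \<le> op f1 f2 + g) N"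
    proof
      fix g assume "g \<in> {g1 + g2 | g1 g2. g1 \<in> G1 \<and> g2 \<in> G2}"
      then obtain g1 g2 where g: "g = g1 + g2" "g1 \<in> G1" "g2 \<in> G2" by blast
      have p: "0 \<le> g1" "0 \<le> g2" using g N1(3) N2(3) unfolding is_inf_in_def by auto
      show "eventually (\<lambda>x. op f1 f2 - g \<le> x \<and> x \<le> op f1 f2 + g) N"
        unfolding N_def eventually_filtermap eventually_prod_filter
        apply (rule exI[of _ "\<lambda>x. f1 - g1 \<le> x \<and> x \<le> f1 + g1"],
           rule exI[of _ "\<lambda>x. f2 - g2 \<le> x \<and> x \<le> f2 + g2"])
        using N1(4) N2(4) g bd[OF p] by auto
    qed
  qed
  ultimately show ?thesis unfolding order_adherence_def by blast
qed


lemma scale_bound: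
  fixes f g x :: "'a::{ordered_real_vector, lattice}"
  assumes "f - g \<le> x" "x \<le> f + g"
  shows "c *\<^sub>R f - \<bar>c\<bar> *\<^sub>R g \<le> c *\<^sub>R x \<and> c *\<^sub>R x \<le> c *\<^sub>R f + \<bar>c\<bar> *\<^sub>R g"
proof (cases "0 \<le> c")
  case True
  have "c *\<^sub>R (f - g) \<le> c *\<^sub>R x" "c *\<^sub>R x \<le> c *\<^sub>R (f + g)"
    using assms True by (auto intro: scaleR_left_mono)
  then show ?thesis using True by (simp add: scaleR_diff_right scaleR_add_right)
next
  case False
  have "c *\<^sub>R x \<le> c *\<^sub>R (f - g)" "c *\<^sub>R (f + g) \<le> c *\<^sub>R x"
    using assms False by (auto intro: scaleR_left_mono_neg)
  then show ?thesis using False by (simp add: scaleR_diff_right scaleR_add_right)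
qed

lemma adh_scale:
  fixes E :: "'a::{ordered_real_vector, lattice} set"
  assumes f: "f \<in> order_adherence E" and cl: "\<And>x. x \<in> E \<Longrightarrow> c *\<^sub>R x \<in> E"
  shows "c *\<^sub>R f \<in> order_adherence E"
proof -
  obtain N G where N: "N \<noteq> bot" "eventually (\<lambda>x. x \<in> E) N" "is_inf_in UNIV G 0"
    "\<forall>g\<in>G. eventually (\<lambda>x. f - g \<le> x \<and> x \<le> f + g) N"
    using f unfolding order_adherence_def order_converges_def by blast
  define N' where "N' = filtermap (\<lambda>x. c *\<^sub>R x) N"
  have "N' \<noteq> bot" using N(1) by (simp add: N'_def filtermap_bot_iff)
  moreover have "eventually (\<lambda>x. x \<in> E) N'"
    unfolding N'_def eventually_filtermap by (rule eventually_mono[OF N(2)]) (rule cl)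
  moreover have "order_converges N' (c *\<^sub>R f)"
    unfolding order_converges_def
  proof (intro exI conjI)
    show "is_inf_in UNIV ((\<lambda>g. \<bar>c\<bar> *\<^sub>R g) ` G) 0"
      unfolding is_inf_in_def
    proof (intro conjI ballI impI)
      show "0 \<in> (UNIV::'a set)" by simp
      fix g assume "g \<in> (\<lambda>g. \<bar>c\<bar> *\<^sub>R g) ` G"
      then show "0 \<le> g" using N(3) unfolding is_inf_in_def by (auto intro: scaleR_nonneg_nonneg)
    next
      fix z :: 'a assume z: "\<forall>g\<in>(\<lambda>g. \<bar>c\<bar> *\<^sub>R g) ` G. z \<le> g"
      show "z \<le> 0"
      proof (cases "c = 0")
        case True
        show ?thesis
        proof (cases "G = {}")
          case True then show ?thesis using N(3) unfolding is_inf_in_def by blast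
        next
          case False then show ?thesis using z \<open>c = 0\<close> by auto
        qed
      next
        case False
        have "(1 / \<bar>c\<bar>) *\<^sub>R z \<le> g" if "g \<in> G" for g
        proof -
          have "z \<le> \<bar>c\<bar> *\<^sub>R g" using z that by auto
          then have "(1 / \<bar>c\<bar>) *\<^sub>R z \<le> (1 / \<bar>c\<bar>) *\<^sub>R (\<bar>c\<bar> *\<^sub>R g)"
            by (intro scaleR_left_mono) auto
          then show ?thesis using False by simp
        qed
        then have "(1 / \<bar>c\<bar>) *\<^sub>R z \<le> 0" using N(3) unfolding is_inf_in_def by blast
        then have "\<bar>c\<bar> *\<^sub>R ((1 / \<bar>c\<bar>) *\<^sub>R z) \<le> \<bar>c\<bar> *\<^sub>R 0"
          by (intro scaleR_left_mono) auto
        then show ?thesis using False by simp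
      qed
    qed
    show "\<forall>g\<in>(\<lambda>g. \<bar>c\<bar> *\<^sub>R g) ` G. eventually (\<lambda>x. c *\<^sub>R f - g \<le> x \<and> x \<le> c *\<^sub>R f + g) N'"
    proof
      fix g' assume "g' \<in> (\<lambda>g. \<bar>c\<bar> *\<^sub>R g) ` G"
      then obtain g where g: "g' = \<bar>c\<bar> *\<^sub>R g" "g \<in> G" by blast
      show "eventually (\<lambda>x. c *\<^sub>R f - g' \<le> x \<and> x \<le> c *\<^sub>R f + g') N'"
        unfolding N'_def eventually_filtermap
        by (rule eventually_mono[OF N(4)[rule_format, OF g(2)]]) (use scale_bound g(1) in auto)
    qed
  qed
  ultimately show ?thesis unfolding order_adherence_def by blast
qed

lemma E_sub_adh:
  fixes E :: "'a::{ordered_real_vector, lattice} set"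
  shows "E \<subseteq> order_adherence E"
proof
  fix e assume e: "e \<in> E"
  have "is_inf_in UNIV {0::'a} 0" unfolding is_inf_in_def by auto
  moreover have "eventually (\<lambda>x. e - 0 \<le> x \<and> x \<le> e + 0) (principal {e})" by (simp add: eventually_principal)
  ultimately have "order_converges (principal {e}) e" unfolding order_converges_def by blast
  then show "e \<in> order_adherence E" unfolding order_adherence_def using e
    by (intro CollectI exI[of _ "principal {e}"]) (auto simp: eventually_principal principal_eq_bot_iff)
qed

lemma adh_sublattice:
  fixes E :: "'a::{ordered_real_vector, lattice} set"
  assumes "vl_sublattice E"
  shows "vl_sublattice (order_adherence E)"
proof -
  have sE: "subspace E" and lE: "\<And>x y. x \<in> E \<Longrightarrow> y \<in> E \<Longrightarrow> sup x y \<in> E \<and> inf x y \<in> E"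
    using assms unfolding vl_sublattice_def by auto
  have "subspace (order_adherence E)"
    unfolding subspace_def
  proof (intro conjI ballI allI)
    show "0 \<in> order_adherence E" using E_sub_adh sE subspace_0 by blast
    fix x y assume x: "x \<in> order_adherence E" and y: "y \<in> order_adherence E"
    show "x + y \<in> order_adherence E"
    proof (rule adh_binop[OF x y, of "(+)"])
      show "\<And>a b. a \<in> E \<Longrightarrow> b \<in> E \<Longrightarrow> a + b \<in> E" using sE subspace_add by blast
      fix a b g1 g2 :: 'a
      assume h: "0 \<le> g1" "0 \<le> g2" "x - g1 \<le> a" "a \<le> x + g1" "y - g2 \<le> b" "b \<le> y + g2"
      have "(x - g1) + (y - g2) \<le> a + b" "a + b \<le> (x + g1) + (y + g2)"
        using h by (auto intro: add_mono)
      then show "x + y - (g1 + g2) \<le> a + b \<and> a + b \<le> x + y + (g1 + g2)"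
        by (simp_all add: algebra_simps)
    qed
  next
    fix c :: real and x assume x: "x \<in> order_adherence E"
    show "c *\<^sub>R x \<in> order_adherence E"
      by (rule adh_scale[OF x]) (use sE subspace_scale in auto)
  qed
  moreover have "sup x y \<in> order_adherence E \<and> inf x y \<in> order_adherence E"
    if x: "x \<in> order_adherence E" and y: "y \<in> order_adherence E" for x y
  proof
    show "sup x y \<in> order_adherence E"
    proof (rule adh_binop[OF x y, of sup])
      show "\<And>a b. a \<in> E \<Longrightarrow> b \<in> E \<Longrightarrow> sup a b \<in> E" using lE by blast
      fix a b g1 g2 :: 'a
      assume h: "0 \<le> g1" "0 \<le> g2" "x - g1 \<le> a" "a \<le> x + g1" "y - g2 \<le> b" "b \<le> y + g2"
      have "sup x y \<le> sup a b + (g1 + g2)"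
      proof (rule sup_least)
        have "x \<le> a + g1" using h by (simp add: diff_le_eq)
        also have "\<dots> \<le> sup a b + (g1 + g2)" using h by (intro add_mono) auto
        finally show "x \<le> sup a b + (g1 + g2)" .
        have "y \<le> b + g2" using h by (simp add: diff_le_eq)
        also have "\<dots> \<le> sup a b + (g1 + g2)" using h by (intro add_mono) auto
        finally show "y \<le> sup a b + (g1 + g2)" .
      qed
      moreover have "sup a b \<le> sup x y + (g1 + g2)"
      proof (rule sup_least)
        have "a \<le> x + g1" using h by simp
        also have "\<dots> \<le> sup x y + (g1 + g2)" using h by (intro add_mono) auto
        finally show "a \<le> sup x y + (g1 + g2)" .
        have "b \<le> y + g2" using h by simp
        also have "\<dots> \<le> sup x y + (g1 + g2)" using h by (intro add_mono) auto
        finally show "b \<le> sup x y + (g1 + g2)" .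
      qed
      ultimately show "sup x y - (g1 + g2) \<le> sup a b \<and> sup a b \<le> sup x y + (g1 + g2)"
        by (simp add: diff_le_eq)
    qed
    show "inf x y \<in> order_adherence E"
    proof (rule adh_binop[OF x y, of inf])
      show "\<And>a b. a \<in> E \<Longrightarrow> b \<in> E \<Longrightarrow> inf a b \<in> E" using lE by blast
      fix a b g1 g2 :: 'a
      assume h: "0 \<le> g1" "0 \<le> g2" "x - g1 \<le> a" "a \<le> x + g1" "y - g2 \<le> b" "b \<le> y + g2"
      have "inf x y - (g1 + g2) \<le> inf a b"
      proof (rule le_infI)
        have "inf x y - (g1 + g2) \<le> x - g1" by (rule diff_mono) (simp_all add: h)
        then show "inf x y - (g1 + g2) \<le> a" using h(3) by (rule order_trans)
        have "inf x y - (g1 + g2) \<le> y - g2" by (rule diff_mono) (simp_all add: h)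
        then show "inf x y - (g1 + g2) \<le> b" using h(5) by (rule order_trans)
      qed
      moreover have "inf a b \<le> inf x y + (g1 + g2)"
      proof -
        have "inf a b - (g1 + g2) \<le> inf x y"
        proof (rule le_infI)
          have "inf a b - (g1 + g2) \<le> a - g1" by (rule diff_mono) (simp_all add: h)
          moreover have "a - g1 \<le> x" using h(4) by (simp add: diff_le_eq)
          ultimately show "inf a b - (g1 + g2) \<le> x" by (rule order_trans)
          have "inf a b - (g1 + g2) \<le> b - g2" by (rule diff_mono) (simp_all add: h)
          moreover have "b - g2 \<le> y" using h(6) by (simp add: diff_le_eq)
          ultimately show "inf a b - (g1 + g2) \<le> y" by (rule order_trans)
        qed
        then show ?thesis by (simp only: diff_le_eq)
      qed
      ultimately show "inf x y - (g1 + g2) \<le> inf a b \<and> inf a b \<le> inf x y + (g1 + g2)" by simp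
    qed
  qed
  ultimately show ?thesis unfolding vl_sublattice_def by blast
qed


lemma lemma_S:
  fixes E :: "'a::{ordered_real_vector, lattice} set"
  assumes arch: "archimedean_vl TYPE('a)" and reg: "regular_sublattice E"
    and f: "f \<in> order_adherence E" and f0: "0 \<le> f"
    and ub: "\<And>e. e \<in> E \<Longrightarrow> 0 \<le> e \<Longrightarrow> e \<le> f \<Longrightarrow> e \<le> u"
  shows "f \<le> u"
proof -
  have sE: "subspace E" and lE: "\<And>x y. x \<in> E \<Longrightarrow> y \<in> E \<Longrightarrow> sup x y \<in> E \<and> inf x y \<in> E"
    and rE: "\<And>G. G \<subseteq> E \<Longrightarrow> is_inf_in E G 0 \<Longrightarrow> is_inf_in UNIV G 0"
    using reg unfolding regular_sublattice_def vl_sublattice_def by auto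
  have archE: "\<And>x y :: 'a. 0 \<le> x \<Longrightarrow> 0 \<le> y \<Longrightarrow> (\<And>n::nat. of_nat n *\<^sub>R x \<le> y) \<Longrightarrow> x = 0"
    using arch unfolding archimedean_vl_def by blast
  have E0: "0 \<in> E" using sE subspace_0 by blast
  obtain N G0 where N: "N \<noteq> bot" "eventually (\<lambda>x. x \<in> E) N" "is_inf_in UNIV G0 0"
    "\<forall>g\<in>G0. eventually (\<lambda>x. f - g \<le> x \<and> x \<le> f + g) N"
    using f unfolding order_adherence_def order_converges_def by blast
  have G0pos: "\<And>k. k \<in> G0 \<Longrightarrow> 0 \<le> k" using N(3) unfolding is_inf_in_def by blast
  have key: "f - inf f u \<le> k" if k: "k \<in> G0" for k
  proof -
    define X where "X = {sup x 0 | x. x \<in> E \<and> f - k \<le> x \<and> x \<le> f + k}"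
    have XE: "\<And>x. x \<in> X \<Longrightarrow> x \<in> E" unfolding X_def using lE E0 by blast
    have X0: "\<And>x. x \<in> X \<Longrightarrow> 0 \<le> x" unfolding X_def by auto
    have Xlow: "\<And>x. x \<in> X \<Longrightarrow> f - k \<le> x" unfolding X_def by (auto intro: le_supI1)
    have evk: "eventually (\<lambda>x. x \<in> E \<and> f - k \<le> x \<and> x \<le> f + k) N"
      using N(2) N(4) k by (auto intro: eventually_conj)
    obtain x0 where "x0 \<in> E \<and> f - k \<le> x0 \<and> x0 \<le> f + k"
      using eventually_happens'[OF N(1) evk] by blast
    then have x0X: "sup x0 0 \<in> X" unfolding X_def by blast
    define L where "L = {l \<in> E. \<forall>x\<in>X. l \<le> x}"
    have Lf: "l \<le> f" if l: "l \<in> L" for l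
    proof -
      have "l - f \<le> k'" if k': "k' \<in> G0" for k'
      proof -
        have "eventually (\<lambda>x. (x \<in> E \<and> f - k \<le> x \<and> x \<le> f + k) \<and> (f - k' \<le> x \<and> x \<le> f + k')) N"
          using eventually_conj[OF evk N(4)[rule_format, OF k']] by simp
        then obtain x where x: "x \<in> E" "f - k \<le> x" "x \<le> f + k" "x \<le> f + k'"
          using eventually_happens'[OF N(1)] by blast
        have "sup x 0 \<in> X" unfolding X_def using x by blast
        then have "l \<le> sup x 0" using l unfolding L_def by blast
        also have "sup x 0 \<le> f + k'"
          using x(4) f0 G0pos[OF k'] by (auto intro: sup_least add_nonneg_nonneg)
        finally show ?thesis by (simp add: diff_le_eq add.commute)
      qed
      then have "l - f \<le> 0" using N(3) unfolding is_inf_in_def by blast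
      then show ?thesis by simp
    qed
    have Lu: "l \<le> inf f u" if l: "l \<in> L" for l
    proof -
      have lE': "l \<in> E" using l unfolding L_def by blast
      have "sup l 0 \<le> u" using ub[of "sup l 0"] lE E0 lE' Lf[OF l] f0 by auto
      then show ?thesis using Lf[OF l] by (auto intro: le_supI1 order_trans)
    qed
    define Y where "Y = {x - l | x l. x \<in> X \<and> l \<in> L}"
    have YE: "Y \<subseteq> E" unfolding Y_def L_def using XE sE subspace_diff by blast
    have Y0: "\<And>y. y \<in> Y \<Longrightarrow> 0 \<le> y" unfolding Y_def L_def by auto
    have "is_inf_in E Y 0"
      unfolding is_inf_in_def
    proof (intro conjI ballI impI)
      show "0 \<in> E" by (fact E0)
      show "\<And>y. y \<in> Y \<Longrightarrow> 0 \<le> y" by (fact Y0)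
      fix m assume mE: "m \<in> E" and mlow: "\<forall>y\<in>Y. m \<le> y"
      define m' where "m' = sup m 0"
      have m'E: "m' \<in> E" unfolding m'_def using lE mE E0 by blast
      have m'0: "0 \<le> m'" unfolding m'_def by simp
      have m'low: "\<And>y. y \<in> Y \<Longrightarrow> m' \<le> y" unfolding m'_def using mlow Y0 by auto
      have nL: "of_nat n *\<^sub>R m' \<in> L" for n :: nat
      proof (induction n)
        case 0
        show ?case unfolding L_def using E0 X0 by auto
      next
        case (Suc n)
        have eq: "of_nat (Suc n) *\<^sub>R m' = of_nat n *\<^sub>R m' + m'" by (simp add: scaleR_add_left)
        have inE: "of_nat n *\<^sub>R m' + m' \<in> E"
          using Suc m'E sE subspace_add unfolding L_def by blast
        have "of_nat n *\<^sub>R m' + m' \<le> x" if x: "x \<in> X" for x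
        proof -
          have "x - of_nat n *\<^sub>R m' \<in> Y" unfolding Y_def using x Suc by blast
          then have "m' \<le> x - of_nat n *\<^sub>R m'" by (rule m'low)
          then show ?thesis by (simp add: le_diff_eq add.commute)
        qed
        then show ?case unfolding L_def eq using inE by blast
      qed
      have "m' = 0"
      proof (rule archE[OF m'0 X0[OF x0X]])
        fix n :: nat show "of_nat n *\<^sub>R m' \<le> sup x0 0" using nL[of n] x0X unfolding L_def by blast
      qed
      then show "m \<le> 0" unfolding m'_def by (metis sup.cobounded1)
    qed
    then have Yinf: "is_inf_in UNIV Y 0" using rE YE by blast
    have "(f - k) - inf f u \<le> y" if y: "y \<in> Y" for y
    proof -
      obtain x l where xl: "y = x - l" "x \<in> X" "l \<in> L" using y unfolding Y_def by blast
      show ?thesis unfolding xl(1) by (rule diff_mono[OF Xlow[OF xl(2)] Lu[OF xl(3)]])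
    qed
    then have "(f - k) - inf f u \<le> 0" using Yinf unfolding is_inf_in_def by blast
    then show ?thesis by (simp add: algebra_simps)
  qed
  then have "f - inf f u \<le> 0" using N(3) unfolding is_inf_in_def by blast
  then have "f \<le> inf f u" by simp
  then show ?thesis by (simp add: le_inf_iff)
qed


lemma adh_dense:
  fixes E :: "'a::{ordered_real_vector, lattice} set"
  assumes arch: "archimedean_vl TYPE('a)" and reg: "regular_sublattice E"
  shows "order_dense_in E (order_adherence E)"
  unfolding order_dense_in_def
proof (intro conjI ballI impI)
  show "E \<subseteq> order_adherence E" by (rule E_sub_adh)
  fix h assume h: "h \<in> order_adherence E" and hpos: "0 < h"
  show "\<exists>e\<in>E. 0 < e \<and> e \<le> h"
  proof (rule ccontr)
    assume no: "\<not> (\<exists>e\<in>E. 0 < e \<and> e \<le> h)"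
    have "h \<le> 0"
    proof (rule lemma_S[OF arch reg h])
      show "0 \<le> h" using hpos by simp
      fix e assume "e \<in> E" "0 \<le> e" "e \<le> h"
      then show "e \<le> 0" using no by (metis order.order_iff_strict)
    qed
    then show False using hpos by simp
  qed
qed

lemma neg_part:
  fixes h :: "'a::{ordered_real_vector, lattice}"
  shows "sup h 0 - sup (- h) 0 = h"
proof -
  have "inf h 0 = - sup (- h) 0"
  proof (rule antisym)
    have "sup (- h) 0 \<le> - inf h 0"
      by (rule sup_least) (simp_all add: neg_le_iff_le)
    then show "inf h 0 \<le> - sup (- h) 0" by (simp add: le_minus_iff)
    show "- sup (- h) 0 \<le> inf h 0"
      by (rule le_infI) (simp_all add: minus_le_iff)
  qed
  then have "sup h 0 - sup (- h) 0 = sup h 0 + inf h 0" by simp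
  also have "\<dots> = h" using sup_inf_add[of h 0] by simp
  finally show ?thesis .
qed

lemma part_c:
  fixes E :: "'a::{ordered_real_vector, lattice} set"
  assumes arch: "archimedean_vl TYPE('a)" and reg: "regular_sublattice E"
    and regH: "regular_sublattice H" and dH: "order_dense_in E H"
  shows "H \<subseteq> order_adherence E"
proof -
  have sE: "subspace E" and lE: "\<And>x y. x \<in> E \<Longrightarrow> y \<in> E \<Longrightarrow> sup x y \<in> E \<and> inf x y \<in> E"
    using reg unfolding regular_sublattice_def vl_sublattice_def by auto
  have sH: "subspace H" and lH: "\<And>x y. x \<in> H \<Longrightarrow> y \<in> H \<Longrightarrow> sup x y \<in> H \<and> inf x y \<in> H"
    and rH: "\<And>G. G \<subseteq> H \<Longrightarrow> is_inf_in H G 0 \<Longrightarrow> is_inf_in UNIV G 0"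
    using regH unfolding regular_sublattice_def vl_sublattice_def by auto
  have EH: "E \<subseteq> H" and dense: "\<And>h. h \<in> H \<Longrightarrow> 0 < h \<Longrightarrow> \<exists>e\<in>E. 0 < e \<and> e \<le> h"
    using dH unfolding order_dense_in_def by auto
  have archE: "\<And>x y :: 'a. 0 \<le> x \<Longrightarrow> 0 \<le> y \<Longrightarrow> (\<And>n::nat. of_nat n *\<^sub>R x \<le> y) \<Longrightarrow> x = 0"
    using arch unfolding archimedean_vl_def by blast
  have E0: "0 \<in> E" using sE subspace_0 by blast
  have H0: "0 \<in> H" using sH subspace_0 by blast
  have sA: "subspace (order_adherence E)"
    using adh_sublattice reg unfolding regular_sublattice_def vl_sublattice_def by blast
  have pos: "p \<in> order_adherence E" if pH: "p \<in> H" and p0: "0 \<le> p" for p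
  proof -
    define D where "D = {e \<in> E. 0 \<le> e \<and> e \<le> p}"
    define K where "K = (\<lambda>e. p - e) ` D"
    have D0: "0 \<in> D" unfolding D_def using E0 p0 by simp
    have KH: "K \<subseteq> H" unfolding K_def D_def using pH EH sH subspace_diff by blast
    have "is_inf_in H K 0"
      unfolding is_inf_in_def
    proof (intro conjI ballI impI)
      show "0 \<in> H" by (fact H0)
      fix k assume "k \<in> K" then show "0 \<le> k" unfolding K_def D_def by auto
    next
      fix a assume aH: "a \<in> H" and alow: "\<forall>k\<in>K. a \<le> k"
      define w where "w = inf (p - a) p"
      have wH: "w \<in> H" unfolding w_def using lH sH subspace_diff pH aH by blast
      have wp: "w \<le> p" unfolding w_def by simp
      have Dw: "e \<le> w" if "e \<in> D" for e
      proof -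
        have "a \<le> p - e" using alow that unfolding K_def by blast
        then have "e \<le> p - a" by (simp add: le_diff_eq add.commute)
        then show ?thesis unfolding w_def using that unfolding D_def by simp
      qed
      have "\<not> 0 < p - w"
      proof
        assume "0 < p - w"
        moreover have "p - w \<in> H" using sH subspace_diff pH wH by blast
        ultimately obtain e0 where e0: "e0 \<in> E" "0 < e0" "e0 \<le> p - w" using dense by blast
        have nD: "of_nat n *\<^sub>R e0 \<in> D" for n :: nat
        proof (induction n)
          case 0 show ?case using D0 by simp
        next
          case (Suc n)
          have eq: "of_nat (Suc n) *\<^sub>R e0 = of_nat n *\<^sub>R e0 + e0" by (simp add: scaleR_add_left)
          have inE: "of_nat n *\<^sub>R e0 + e0 \<in> E" using Suc e0(1) sE subspace_add unfolding D_def by blast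
          have "of_nat n *\<^sub>R e0 \<le> w" using Dw Suc by blast
          then have "of_nat n *\<^sub>R e0 + e0 \<le> w + (p - w)" using e0(3) by (rule add_mono)
          moreover have "0 \<le> of_nat n *\<^sub>R e0 + e0" using Suc e0(2) unfolding D_def by simp
          ultimately show ?case unfolding D_def eq using inE by simp
        qed
        have "e0 = 0"
          by (rule archE[OF _ p0]) (use e0(2) nD in \<open>auto simp: D_def\<close>)
        then show False using e0(2) by simp
      qed
      moreover have "0 \<le> p - w" using wp by simp
      ultimately have "p = w" by (simp add: order.order_iff_strict)
      then have "p \<le> p - a" unfolding w_def by (metis inf.absorb_iff2)
      then show "a \<le> 0" by simp
    qed
    then have Kinf: "is_inf_in UNIV K 0" using rH KH by blast
    define N where "N = (INF d\<in>D. principal {e \<in> D. d \<le> e})"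
    have dir: "\<exists>x\<in>D. principal {e \<in> D. x \<le> e} \<le> inf (principal {e \<in> D. a \<le> e}) (principal {e \<in> D. b \<le> e})"
      if "a \<in> D" "b \<in> D" for a b
    proof (intro bexI)
      show "sup a b \<in> D" using that lE unfolding D_def by (auto intro: le_supI1)
      show "principal {e \<in> D. sup a b \<le> e} \<le> inf (principal {e \<in> D. a \<le> e}) (principal {e \<in> D. b \<le> e})"
        by (auto simp: inf_principal)
    qed
    have evN: "eventually P N \<longleftrightarrow> (\<exists>d\<in>D. eventually P (principal {e \<in> D. d \<le> e}))" for P
      unfolding N_def by (rule eventually_INF_base) (use D0 dir in auto)
    have "N \<noteq> bot"
    proof -
      have "(INF d\<in>D. principal {e \<in> D. d \<le> e}) = bot \<longleftrightarrow> (\<exists>d\<in>D. principal {e \<in> D. d \<le> e} = bot)"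
        by (rule INF_filter_bot_base) (use dir in auto)
      moreover have "\<forall>d\<in>D. principal {e \<in> D. d \<le> e} \<noteq> bot" by (auto simp: principal_eq_bot_iff)
      ultimately show ?thesis unfolding N_def by blast
    qed
    moreover have "eventually (\<lambda>x. x \<in> E) N"
      unfolding evN using D0 by (auto simp: eventually_principal D_def)
    moreover have "order_converges N p"
      unfolding order_converges_def
    proof (intro exI conjI)
      show "is_inf_in UNIV K 0" by (fact Kinf)
      show "\<forall>g\<in>K. eventually (\<lambda>x. p - g \<le> x \<and> x \<le> p + g) N"
      proof
        fix g assume "g \<in> K"
        then obtain d where d: "d \<in> D" "g = p - d" unfolding K_def by blast
        have "\<forall>x\<in>{e \<in> D. d \<le> e}. p - g \<le> x \<and> x \<le> p + g"
        proof
          fix x assume x: "x \<in> {e \<in> D. d \<le> e}"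
          have "x \<le> p" "d \<le> p" using x d unfolding D_def by auto
          then have "x \<le> p + (p - d)" by (simp add: add_increasing2)
          then show "p - g \<le> x \<and> x \<le> p + g" using x d by simp
        qed
        then show "eventually (\<lambda>x. p - g \<le> x \<and> x \<le> p + g) N"
          unfolding evN using d(1) by (auto simp: eventually_principal)
      qed
    qed
    ultimately show ?thesis unfolding order_adherence_def by blast
  qed
  show ?thesis
  proof
    fix h assume hH: "h \<in> H"
    have p: "sup h 0 \<in> order_adherence E" using pos lH hH H0 by simp
    have q: "sup (- h) 0 \<in> order_adherence E" using pos lH hH H0 sH subspace_neg by (metis sup.cobounded2)
    have "sup h 0 - sup (- h) 0 \<in> order_adherence E" using sA subspace_diff p q by blast
    then show "h \<in> order_adherence E" by (simp add: neg_part)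
  qed
qed


lemma adh_regular:
  fixes E :: "'a::{ordered_real_vector, lattice} set"
  assumes arch: "archimedean_vl TYPE('a)" and reg: "regular_sublattice E"
  shows "regular_sublattice (order_adherence E)"
proof -
  have sE: "subspace E" and lE: "\<And>x y. x \<in> E \<Longrightarrow> y \<in> E \<Longrightarrow> sup x y \<in> E \<and> inf x y \<in> E"
    and rE: "\<And>G. G \<subseteq> E \<Longrightarrow> is_inf_in E G 0 \<Longrightarrow> is_inf_in UNIV G 0"
    using reg unfolding regular_sublattice_def vl_sublattice_def by auto
  have E0: "0 \<in> E" using sE subspace_0 by blast
  have vA: "vl_sublattice (order_adherence E)"
    using adh_sublattice reg unfolding regular_sublattice_def by blast
  then have sA: "subspace (order_adherence E)"
    and lA: "\<And>x y. x \<in> order_adherence E \<Longrightarrow> y \<in> order_adherence E \<Longrightarrow>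
       sup x y \<in> order_adherence E \<and> inf x y \<in> order_adherence E"
    unfolding vl_sublattice_def by auto
  have EA: "E \<subseteq> order_adherence E" by (rule E_sub_adh)
  have "is_inf_in UNIV G 0"
    if GA: "G \<subseteq> order_adherence E" and Ginf: "is_inf_in (order_adherence E) G 0" for G
  proof -
    have Gpos: "\<And>g. g \<in> G \<Longrightarrow> 0 \<le> g" using Ginf unfolding is_inf_in_def by blast
    have Aglb: "\<And>c. c \<in> order_adherence E \<Longrightarrow> (\<forall>g\<in>G. c \<le> g) \<Longrightarrow> c \<le> 0"
      using Ginf unfolding is_inf_in_def by blast
    show ?thesis
      unfolding is_inf_in_def
    proof (intro conjI ballI impI)
      show "0 \<in> (UNIV :: 'a set)" by simp
      show "\<And>g. g \<in> G \<Longrightarrow> 0 \<le> g" by (fact Gpos)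
      fix a assume alow: "\<forall>g\<in>G. a \<le> g"
      show "a \<le> 0"
      proof (cases "G = {}")
        case True
        have "is_inf_in E {} 0" unfolding is_inf_in_def using E0 Aglb EA True by auto
        then have "is_inf_in UNIV {} (0::'a)" using rE by blast
        then show ?thesis unfolding is_inf_in_def by blast
      next
        case False
        then obtain g0 where g0: "g0 \<in> G" by blast
        define a' where "a' = sup a 0"
        have a'low: "\<And>g. g \<in> G \<Longrightarrow> a' \<le> g" unfolding a'_def using alow Gpos by auto
        have main: "inf a' d \<le> 0" if dE: "d \<in> E" and d0: "0 \<le> d" for d
        proof -
          define U where "U = {u \<in> E. \<exists>g\<in>G. inf g d \<le> u}"
          have "is_inf_in E U 0"
            unfolding is_inf_in_def
          proof (intro conjI ballI impI)
            show "0 \<in> E" by (fact E0)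
            fix u assume "u \<in> U"
            then obtain g where "g \<in> G" "inf g d \<le> u" unfolding U_def by blast
            then show "0 \<le> u" using Gpos d0 by (meson le_inf_iff order_trans)
          next
            fix m assume mE: "m \<in> E" and mlow: "\<forall>u\<in>U. m \<le> u"
            have "m \<le> g" if g: "g \<in> G" for g
            proof -
              define q where "q = d - inf g d"
              have gA: "g \<in> order_adherence E" using g GA by blast
              have dA: "d \<in> order_adherence E" using dE EA by blast
              have qA: "q \<in> order_adherence E" unfolding q_def
                using lA[OF gA dA] dA sA subspace_diff by blast
              have q0: "0 \<le> q" unfolding q_def by simp
              have "q \<le> d - m"
              proof (rule lemma_S[OF arch reg qA q0])
                fix e assume eE: "e \<in> E" and "0 \<le> e" and eq: "e \<le> q"
                have "d - e \<in> E" using sE subspace_diff dE eE by blast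
                moreover have "inf g d \<le> d - e" using eq unfolding q_def by (simp add: le_diff_eq add.commute)
                ultimately have "d - e \<in> U" unfolding U_def using g by blast
                then have "m \<le> d - e" using mlow by blast
                then show "e \<le> d - m" by (simp add: le_diff_eq add.commute)
              qed
              then have "m \<le> inf g d" unfolding q_def by (simp add: le_diff_eq add.commute)
              then show ?thesis by simp
            qed
            then show "m \<le> 0" using Aglb mE EA by blast
          qed
          moreover have "U \<subseteq> E" unfolding U_def by blast
          ultimately have Uinf: "is_inf_in UNIV U 0" using rE by blast
          have "inf a' d \<le> u" if uU: "u \<in> U" for u
          proof -
            obtain g where "g \<in> G" "inf g d \<le> u" using uU unfolding U_def by blast
            moreover have "inf a' d \<le> inf g d" using a'low[OF \<open>g \<in> G\<close>] by (rule inf_mono) simp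
            ultimately show ?thesis by (meson order_trans)
          qed
          then show ?thesis using Uinf unfolding is_inf_in_def by blast
        qed
        have g0A: "g0 \<in> order_adherence E" using g0 GA by blast
        have "g0 \<le> g0 - a'"
        proof (rule lemma_S[OF arch reg g0A Gpos[OF g0]])
          fix e assume eE: "e \<in> E" and e0: "0 \<le> e" and eg: "e \<le> g0"
          have "e + a' = sup e a' + inf a' e" using sup_inf_add[of e a'] by (simp add: inf.commute)
          also have "\<dots> \<le> sup e a' + 0" using main[OF eE e0] by (rule add_left_mono)
          also have "\<dots> \<le> g0" using eg a'low[OF g0] by simp
          finally show "e \<le> g0 - a'" by (simp add: le_diff_eq)
        qed
        then have "a' \<le> 0" by simp
        then show ?thesis unfolding a'_def by simp
      qed
    qed
  qed
  then show ?thesis using vA unfolding regular_sublattice_def by blast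
qed

theorem theorem9p1:
  fixes E :: "'a::{ordered_real_vector, lattice} set"
  assumes "archimedean_vl TYPE('a)"
    and "regular_sublattice E"
  shows "regular_sublattice (order_adherence E)
    \<and> order_dense_in E (order_adherence E)
    \<and> (\<forall>H. regular_sublattice H \<and> order_dense_in E H \<longrightarrow> H \<subseteq> order_adherence E)"
  using adh_regular[OF assms] adh_dense[OF assms] part_c[OF assms] by blast

end
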